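(* Let $G$ be a group acting geometrically (i.e.\ properly and cocompactly by isometries) on two CAT(0) spaces $X$ and $X'$. For $g\in G$, let $\mathcal{F}_g\subset\partial X$ and $\mathcal{F}'_g\subset\partial X'$ be the fixed-point sets of $g$ in $\partial X$ and $\partial X'$ respectively. Then $\mathcal{F}_g\neq\emptyset$ if and only if $\mathcal{F}'_g\neq\emptyset$.
   Context: $\partial X$ denotes the visual boundary of the (necessarily proper) CAT(0) space $X$: asymptotic classes of geodesic rays with the cone topology. An isometry $g$ acts on $\partial X$ by $g(\xi(\infty))=(g\circ\xi)(\infty)$, and the fixed-point set is $\mathcal{F}_g=\{\alpha\in\partial X\mid g\alpha=\alpha\}$. *)

theory Defs
  imports "HOL-Analysis.Analysis" "HOL-Algebra.Group_Action"
begin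

definition geodesic_segment :: "(real \<Rightarrow> 'a::metric_space) \<Rightarrow> 'a \<Rightarrow> 'a \<Rightarrow> bool" where
  "geodesic_segment c x y \<longleftrightarrow> c 0 = x \<and> c (dist x y) = y \<and>
     (\<forall>s t. 0 \<le> s \<and> s \<le> dist x y \<and> 0 \<le> t \<and> t \<le> dist x y
        \<longrightarrow> dist (c s) (c t) = \<bar>s - t\<bar>)"

definition geodesic_space :: "'a::metric_space itself \<Rightarrow> bool" where
  "geodesic_space _ \<longleftrightarrow> (\<forall>x y::'a. \<exists>c. geodesic_segment c x y)"

definition proper_metric_space :: "'a::metric_space itself \<Rightarrow> bool" where
  "proper_metric_space _ \<longleftrightarrow> (\<forall>(x::'a) r. compact (cball x r))"

text \<open>Pairs (point on the side c from a to b, its comparison point on the Euclidean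
  segment [a',b'] in the plane), where L = d(a,b).\<close>
definition side_pairs :: "(real \<Rightarrow> 'a::metric_space) \<Rightarrow> real \<Rightarrow> complex \<Rightarrow> complex \<Rightarrow> ('a \<times> complex) set" where
  "side_pairs c L a' b' = {(c t, a' + (t / L) *\<^sub>R (b' - a')) | t. 0 \<le> t \<and> t \<le> L}"

text \<open>CAT(0) inequality for the geodesic triangle with sides c1 (x to y), c2 (y to z),
  c3 (z to x): for every comparison triangle in the Euclidean plane (here: \<complex>)
  distances between points of the triangle are at most the distances of their
  comparison points.\<close>
definition CAT0_triangle_ineq ::
  "'a::metric_space \<Rightarrow> 'a \<Rightarrow> 'a \<Rightarrow> (real \<Rightarrow> 'a) \<Rightarrow> (real \<Rightarrow> 'a) \<Rightarrow> (real \<Rightarrow> 'a) \<Rightarrow> bool" where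
  "CAT0_triangle_ineq x y z c1 c2 c3 \<longleftrightarrow>
    (\<forall>x' y' z' :: complex.
       dist x' y' = dist x y \<and> dist y' z' = dist y z \<and> dist z' x' = dist z x \<longrightarrow>
       (let T = side_pairs c1 (dist x y) x' y' \<union> side_pairs c2 (dist y z) y' z'
                \<union> side_pairs c3 (dist z x) z' x'
        in \<forall>p p' q q'. (p, p') \<in> T \<and> (q, q') \<in> T \<longrightarrow> dist p q \<le> dist p' q'))"

definition CAT0_space :: "'a::metric_space itself \<Rightarrow> bool" where
  "CAT0_space T \<longleftrightarrow> geodesic_space T \<and>
     (\<forall>(x::'a) y z c1 c2 c3. geodesic_segment c1 x y \<and> geodesic_segment c2 y z \<and>
        geodesic_segment c3 z x \<longrightarrow> CAT0_triangle_ineq x y z c1 c2 c3)"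

definition geodesic_rays :: "(real \<Rightarrow> 'a::metric_space) set" where
  "geodesic_rays = {r. \<forall>s t. 0 \<le> s \<and> 0 \<le> t \<longrightarrow> dist (r s) (r t) = \<bar>s - t\<bar>}"

definition asymptotic :: "((real \<Rightarrow> 'a::metric_space) \<times> (real \<Rightarrow> 'a)) set" where
  "asymptotic = {(r, r'). r \<in> geodesic_rays \<and> r' \<in> geodesic_rays \<and>
       (\<exists>C. \<forall>t\<ge>0. dist (r t) (r' t) \<le> C)}"

definition visual_boundary :: "(real \<Rightarrow> 'a::metric_space) set set" where
  "visual_boundary = geodesic_rays // asymptotic"

text \<open>Induced action of a map on boundary classes: g(xi(\<infinity>)) = (g \<circ> xi)(\<infinity>).\<close>
definition bd_act :: "('a::metric_space \<Rightarrow> 'a) \<Rightarrow> (real \<Rightarrow> 'a) set \<Rightarrow> (real \<Rightarrow> 'a) set" where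
  "bd_act f \<alpha> = (\<Union>r\<in>\<alpha>. asymptotic `` {f \<circ> r})"

definition bd_fixed_points :: "('a::metric_space \<Rightarrow> 'a) \<Rightarrow> (real \<Rightarrow> 'a) set set" where
  "bd_fixed_points f = {\<alpha> \<in> visual_boundary. bd_act f \<alpha> = \<alpha>}"

definition isometry :: "('a::metric_space \<Rightarrow> 'a) \<Rightarrow> bool" where
  "isometry f \<longleftrightarrow> surj f \<and> (\<forall>x y. dist (f x) (f y) = dist x y)"

text \<open>Proper (properly discontinuous) action, Bridson--Haefliger I.8.2.\<close>
definition proper_action :: "('g, 'c) monoid_scheme \<Rightarrow> ('g \<Rightarrow> 'a::metric_space \<Rightarrow> 'a) \<Rightarrow> bool" where
  "proper_action G \<phi> \<longleftrightarrow> (\<forall>x. \<exists>r>0.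
      finite {g \<in> carrier G. \<phi> g ` ball x r \<inter> ball x r \<noteq> {}})"

definition cocompact_action :: "('g, 'c) monoid_scheme \<Rightarrow> ('g \<Rightarrow> 'a::metric_space \<Rightarrow> 'a) \<Rightarrow> bool" where
  "cocompact_action G \<phi> \<longleftrightarrow> (\<exists>K. compact K \<and> (\<Union>g\<in>carrier G. \<phi> g ` K) = UNIV)"

definition geometric_action :: "('g, 'c) monoid_scheme \<Rightarrow> ('g \<Rightarrow> 'a::metric_space \<Rightarrow> 'a) \<Rightarrow> bool" where
  "geometric_action G \<phi> \<longleftrightarrow> group_action G UNIV \<phi> \<and>
     (\<forall>g\<in>carrier G. isometry (\<phi> g)) \<and> proper_action G \<phi> \<and> cocompact_action G \<phi>"

end

theory Submission
  imports Defs
begin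

lemma comparison_exists:
  fixes a b e :: real
  assumes "a \<ge> 0" "b \<ge> 0" "e \<ge> 0" "b \<le> a + e" "a \<le> b + e" "e \<le> a + b"
  shows "\<exists>x' y' z' :: complex. dist x' y' = a \<and> dist y' z' = b \<and> dist z' x' = e"
proof (cases "a = 0")
  case True
  then have "b = e" using assms by auto
  then show ?thesis using True
    by (intro exI[of _ 0] exI[of _ "complex_of_real e"]) (auto simp: dist_norm assms)
next
  case False
  then have a: "a > 0" using assms by auto
  define u where "u = (a\<^sup>2 + e\<^sup>2 - b\<^sup>2) / (2*a)"
  have h1: "a\<^sup>2 + e\<^sup>2 - b\<^sup>2 \<le> 2*a*e"
  proof -
    have "\<bar>a - e\<bar> \<le> b" using assms by auto
    then have "(a-e)\<^sup>2 \<le> b\<^sup>2" by (metis abs_le_square_iff abs_of_nonneg assms(2))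
    then show ?thesis by (simp add: power2_eq_square algebra_simps)
  qed
  have h2: "- (2*a*e) \<le> a\<^sup>2 + e\<^sup>2 - b\<^sup>2"
  proof -
    have "b \<le> a + e" using assms by auto
    then have "b\<^sup>2 \<le> (a+e)\<^sup>2" using assms(2) power_mono by blast
    then show ?thesis by (simp add: power2_eq_square algebra_simps)
  qed
  have "\<bar>u\<bar> \<le> e" using h1 h2 a unfolding u_def
    by (auto simp: abs_le_iff divide_le_eq le_divide_eq mult.commute mult.left_commute)
  then have ue: "u\<^sup>2 \<le> e\<^sup>2" by (metis abs_le_square_iff abs_of_nonneg assms(3))
  define v where "v = sqrt (e\<^sup>2 - u\<^sup>2)"
  have v2: "v\<^sup>2 = e\<^sup>2 - u\<^sup>2" using ue unfolding v_def by simp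
  have au: "2*a*u = a\<^sup>2 + e\<^sup>2 - b\<^sup>2" using a unfolding u_def by simp
  have d1: "dist (0::complex) (complex_of_real a) = a" using a by (simp add: dist_norm)
  have d2: "dist (complex_of_real a) (Complex u v) = b"
  proof -
    have "(cmod (complex_of_real a - Complex u v))\<^sup>2 = (a - u)\<^sup>2 + v\<^sup>2"
      by (simp add: cmod_def complex_of_real_def)
    also have "\<dots> = b\<^sup>2" using v2 au by (simp add: power2_eq_square algebra_simps)
    finally show ?thesis by (simp add: dist_norm assms(2))
  qed
  have d3: "dist (Complex u v) 0 = e"
  proof -
    have "(cmod (Complex u v))\<^sup>2 = u\<^sup>2 + v\<^sup>2" by (simp add: cmod_def)
    also have "\<dots> = e\<^sup>2" using v2 by simp
    finally show ?thesis by (simp add: dist_norm assms(3))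
  qed
  show ?thesis using d1 d2 d3 by blast
qed

lemma geodesic_reverse:
  assumes "geodesic_segment c x y"
  shows "geodesic_segment (\<lambda>u. c (dist x y - u)) y x"
  using assms unfolding geodesic_segment_def
  by (auto simp: dist_commute)

lemma geodesic_dist:
  assumes "geodesic_segment c x y" "0 \<le> t" "t \<le> dist x y"
  shows "dist x (c t) = t"
  using assms unfolding geodesic_segment_def by (metis abs_of_nonneg diff_0 abs_minus_cancel order_refl zero_le_dist)

lemma cat0_common:
  fixes c c' :: "real \<Rightarrow> 'a::metric_space"
  assumes cat: "CAT0_space TYPE('a)" and g1: "geodesic_segment c p a"
    and g2: "geodesic_segment c' p b" and s: "0 \<le> s" "s \<le> 1"
  shows "dist (c (s * dist p a)) (c' (s * dist p b)) \<le> s * dist a b"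
proof -
  from cat obtain c2 where g3: "geodesic_segment c2 a b"
    unfolding CAT0_space_def geodesic_space_def by blast
  define c3 where "c3 = (\<lambda>u. c' (dist p b - u))"
  have g4: "geodesic_segment c3 b p" using geodesic_reverse[OF g2] unfolding c3_def .
  have tri: "CAT0_triangle_ineq p a b c c2 c3" using cat g1 g3 g4 unfolding CAT0_space_def by blast
  obtain p' a' b' :: complex where d: "dist p' a' = dist p a" "dist a' b' = dist a b" "dist b' p' = dist b p"
    using comparison_exists[of "dist p a" "dist a b" "dist b p"]
    by (metis dist_commute dist_triangle zero_le_dist)
  define P where "P = p' + s *\<^sub>R (a' - p')"
  define Q where "Q = p' + s *\<^sub>R (b' - p')"
  have m1: "(c (s * dist p a), P) \<in> side_pairs c (dist p a) p' a'"
  proof (cases "dist p a = 0")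
    case True
    then have "a' = p'" using d by simp
    then show ?thesis unfolding side_pairs_def P_def using True
      by (auto intro!: exI[of _ 0])
  next
    case False
    then show ?thesis unfolding side_pairs_def P_def using s
      by (auto intro!: exI[of _ "s * dist p a"] simp: mult_le_cancel_right1)
  qed
  have m2: "(c' (s * dist p b), Q) \<in> side_pairs c3 (dist b p) b' p'"
  proof (cases "dist p b = 0")
    case True
    then have "b' = p'" using d by (simp add: dist_commute)
    then show ?thesis unfolding side_pairs_def Q_def c3_def using True
      by (auto simp: dist_commute intro!: exI[of _ 0])
  next
    case False
    have e1: "c3 ((1 - s) * dist b p) = c' (s * dist p b)"
      unfolding c3_def by (simp add: dist_commute algebra_simps)
    have e2: "b' + ((1 - s) * dist b p / dist b p) *\<^sub>R (p' - b') = Q"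
    proof -
      have "(1 - s) * dist b p / dist b p = 1 - s" using False by (simp add: dist_commute)
      then have "b' + ((1 - s) * dist b p / dist b p) *\<^sub>R (p' - b') = b' + (1 - s) *\<^sub>R (p' - b')"
        by presburger
      also have "\<dots> = Q" unfolding Q_def by (simp add: algebra_simps)
      finally show ?thesis .
    qed
    have e3: "(1 - s) * dist b p \<le> dist b p" "0 \<le> (1 - s) * dist b p" using s
      by (simp_all add: mult_left_le_one_le)
    show ?thesis unfolding side_pairs_def using e1 e2 e3
      by (intro CollectI exI[of _ "(1 - s) * dist b p"]) simp
  qed
  have "dist (c (s * dist p a)) (c' (s * dist p b)) \<le> dist P Q"
    using tri d m1 m2 unfolding CAT0_triangle_ineq_def Let_def by blast
  also have "dist P Q = s * dist a' b'"
  proof -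
    have "P - Q = s *\<^sub>R (a' - b')" unfolding P_def Q_def by (simp add: algebra_simps)
    then show ?thesis using s by (simp add: dist_norm)
  qed
  finally show ?thesis using d by simp
qed

lemma cat0_parallel:
  fixes \<sigma> \<sigma>' :: "real \<Rightarrow> 'a::metric_space"
  assumes cat: "CAT0_space TYPE('a)" and g1: "geodesic_segment \<sigma> x y"
    and g2: "geodesic_segment \<sigma>' x' y'" and L: "dist x' y' = dist x y"
    and t: "0 \<le> t" "t \<le> dist x y" and C: "dist x x' \<le> C" "dist y y' \<le> C"
  shows "dist (\<sigma> t) (\<sigma>' t) \<le> C"
proof (cases "dist x y = 0")
  case True
  then have "t = 0" using t by simp
  then show ?thesis using g1 g2 C unfolding geodesic_segment_def by simp
next
  case False
  define s where "s = t / dist x y"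
  have s: "0 \<le> s" "s \<le> 1" "t = s * dist x y" using t False unfolding s_def by auto
  from cat obtain \<tau> where g3: "geodesic_segment \<tau> x y'"
    unfolding CAT0_space_def geodesic_space_def by blast
  have h1: "dist (\<sigma> (s * dist x y)) (\<tau> (s * dist x y')) \<le> s * dist y y'"
    by (rule cat0_common[OF cat g1 g3 s(1,2)])
  have g4: "geodesic_segment (\<lambda>u. \<tau> (dist x y' - u)) y' x" by (rule geodesic_reverse[OF g3])
  have g5: "geodesic_segment (\<lambda>u. \<sigma>' (dist x' y' - u)) y' x'" by (rule geodesic_reverse[OF g2])
  have h2: "dist (\<tau> (dist x y' - (1 - s) * dist y' x)) (\<sigma>' (dist x' y' - (1 - s) * dist y' x'))
      \<le> (1 - s) * dist x x'"
    using cat0_common[OF cat g4 g5, of "1 - s"] s by simp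
  have e1: "dist x y' - (1 - s) * dist y' x = s * dist x y'" by (simp add: dist_commute algebra_simps)
  have e2: "dist x' y' - (1 - s) * dist y' x' = t" using s L by (simp add: dist_commute algebra_simps)
  have "dist (\<sigma> t) (\<sigma>' t) \<le> dist (\<sigma> t) (\<tau> (s * dist x y')) + dist (\<tau> (s * dist x y')) (\<sigma>' t)"
    by (rule dist_triangle)
  also have "\<dots> \<le> s * dist y y' + (1 - s) * dist x x'"
    using h1 h2 e1 e2 s(3) by simp
  also have "\<dots> \<le> s * C + (1 - s) * C"
    using s C by (intro add_mono mult_left_mono) auto
  finally show ?thesis by (simp add: algebra_simps)
qed

lemma isometry_cont: "isometry g \<Longrightarrow> continuous_on UNIV g"
  unfolding continuous_on_iff isometry_def by (metis UNIV_I)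

lemma isometry_geodesic:
  assumes "isometry g" "geodesic_segment \<sigma> x y"
  shows "geodesic_segment (g \<circ> \<sigma>) (g x) (g y)"
  using assms unfolding isometry_def geodesic_segment_def by auto

lemma ray_construct:
  fixes g :: "'a::metric_space \<Rightarrow> 'a"
  assumes cat: "CAT0_space TYPE('a)" and pr: "proper_metric_space TYPE('a)"
    and iso: "isometry g"
    and far: "\<And>n::nat. \<exists>y. real n \<le> dist x0 y \<and> dist y (g y) \<le> c"
    and c0: "dist x0 (g x0) \<le> c"
  shows "\<exists>r \<in> geodesic_rays. \<forall>t. dist (r t) (g (r t)) \<le> c"
proof -
  define U :: "(real \<Rightarrow> 'a) set" where "U = PiE UNIV (\<lambda>t. cball x0 \<bar>t\<bar>)"
  have "compactin (product_topology (\<lambda>_. euclidean) UNIV) U"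
    unfolding U_def compactin_PiE using pr unfolding proper_metric_space_def by simp
  then have cU: "compact U" by (simp add: euclidean_product_topology)
  define A :: "nat \<Rightarrow> (real \<Rightarrow> 'a) set" where
    "A n = (\<Inter>s\<in>{0..real n}. \<Inter>t\<in>{0..real n}. {F. dist (F s) (F t) = \<bar>s - t\<bar>})
           \<inter> (\<Inter>t. {F. dist (F t) (g (F t)) \<le> c})" for n
  have gc: "continuous_on UNIV g" using iso by (rule isometry_cont)
  have contg: "continuous_on UNIV (\<lambda>F::real \<Rightarrow> 'a. g (F t))" for t
    by (rule continuous_on_compose2[OF gc continuous_on_product_coordinates]) auto
  have closedA: "closed (A n)" for n
  proof -
    have c1: "closed {F::real \<Rightarrow> 'a. dist (F s) (F t) = \<bar>s - t\<bar>}" for s t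
    proof (rule closed_Collect_eq)
      show "continuous_on UNIV (\<lambda>F::real \<Rightarrow> 'a. dist (F s) (F t))"
        using continuous_on_dist[OF continuous_on_product_coordinates continuous_on_product_coordinates] .
    qed (rule continuous_on_const)
    have c2: "closed {F::real \<Rightarrow> 'a. dist (F t) (g (F t)) \<le> c}" for t
    proof (rule closed_Collect_le)
      show "continuous_on UNIV (\<lambda>F::real \<Rightarrow> 'a. dist (F t) (g (F t)))"
        using continuous_on_dist[OF continuous_on_product_coordinates contg] .
    qed (rule continuous_on_const)
    have c3: "closed (\<Inter>s\<in>{0..real n}. \<Inter>t\<in>{0..real n}. {F::real \<Rightarrow> 'a. dist (F s) (F t) = \<bar>s - t\<bar>})"
      using c1 by (intro closed_INT) blast
    have c4: "closed (\<Inter>t. {F::real \<Rightarrow> 'a. dist (F t) (g (F t)) \<le> c})"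
      using c2 by (intro closed_INT) blast
    show ?thesis unfolding A_def using c3 c4 by (rule closed_Int)
  qed
  have monoA: "m \<le> n \<Longrightarrow> A n \<subseteq> A m" for m n
    unfolding A_def by auto
  have wit: "U \<inter> A n \<noteq> {}" for n
  proof -
    obtain y where y: "real n \<le> dist x0 y" "dist y (g y) \<le> c" using far by blast
    from cat obtain \<sigma> where \<sigma>: "geodesic_segment \<sigma> x0 y"
      unfolding CAT0_space_def geodesic_space_def by blast
    define L where "L = dist x0 y"
    define f where "f t = (if t < 0 then x0 else \<sigma> (min t L))" for t
    have dsig: "dist x0 (\<sigma> u) = u" if "0 \<le> u" "u \<le> L" for u
      using geodesic_dist[OF \<sigma>] that unfolding L_def by simp
    have "f \<in> U" unfolding U_def f_def
      using dsig by (auto simp: PiE_iff L_def)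
    moreover have "f \<in> A n"
    proof -
      have "dist (f s) (f t) = \<bar>s - t\<bar>" if "s \<in> {0..real n}" "t \<in> {0..real n}" for s t
        using that y(1) \<sigma> unfolding f_def L_def geodesic_segment_def by auto
      moreover have "dist (f t) (g (f t)) \<le> c" for t
      proof (cases "t < 0")
        case True then show ?thesis using c0 unfolding f_def by simp
      next
        case False
        have gs: "geodesic_segment (g \<circ> \<sigma>) (g x0) (g y)" by (rule isometry_geodesic[OF iso \<sigma>])
        have "dist (g x0) (g y) = dist x0 y" using iso unfolding isometry_def by simp
        from cat0_parallel[OF cat \<sigma> gs this, of "min t L" c] False c0 y(2)
        show ?thesis unfolding f_def L_def by simp
      qed
      ultimately show ?thesis unfolding A_def by auto
    qed
    ultimately show ?thesis by blast
  qed
  have "U \<inter> \<Inter>(range A) \<noteq> {}"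
  proof (rule compact_imp_fip[OF cU])
    show "closed T" if "T \<in> range A" for T using that closedA by auto
    fix F' assume F': "finite F'" "F' \<subseteq> range A"
    then obtain N where N: "finite N" "F' = A ` N" by (meson finite_subset_image)
    define n where "n = Max (insert 0 N)"
    have "A n \<subseteq> T" if "T \<in> F'" for T
    proof -
      obtain m where m: "m \<in> N" "T = A m" using \<open>T \<in> F'\<close> N(2) by blast
      have "m \<le> n" unfolding n_def using N(1) m(1) by (simp add: Max_ge_iff)
      then show ?thesis using monoA m(2) by blast
    qed
    then have "A n \<subseteq> \<Inter>F'" by blast
    then show "U \<inter> \<Inter>F' \<noteq> {}" using wit[of n] by blast
  qed
  then obtain r where r: "r \<in> U" "\<And>n. r \<in> A n" by blast
  have "r \<in> geodesic_rays" unfolding geodesic_rays_def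
  proof (intro CollectI allI impI)
    fix s t :: real assume st: "0 \<le> s \<and> 0 \<le> t"
    define n where "n = nat \<lceil>max s t\<rceil>"
    have "s \<le> real n" "t \<le> real n" unfolding n_def by linarith+
    then show "dist (r s) (r t) = \<bar>s - t\<bar>" using r(2)[of n] st unfolding A_def by auto
  qed
  moreover have "\<forall>t. dist (r t) (g (r t)) \<le> c" using r(2)[of 0] unfolding A_def by auto
  ultimately show ?thesis by blast
qed

lemma asym_equiv: "equiv geodesic_rays (asymptotic :: ((real \<Rightarrow> 'a::metric_space) \<times> _) set)"
proof (rule equivI)
  show "asymptotic \<subseteq> geodesic_rays \<times> geodesic_rays" unfolding asymptotic_def by auto
  show "refl_on geodesic_rays (asymptotic :: ((real \<Rightarrow> 'a) \<times> _) set)"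
    by (rule refl_onI) (auto simp: asymptotic_def)
  show "sym (asymptotic :: ((real \<Rightarrow> 'a) \<times> _) set)"
    unfolding sym_def asymptotic_def by (auto simp: dist_commute)
  show "trans (asymptotic :: ((real \<Rightarrow> 'a) \<times> _) set)"
    unfolding trans_def asymptotic_def
  proof (clarsimp)
    fix x y z :: "real \<Rightarrow> 'a" and C1 C2
    assume h: "\<forall>t\<ge>0. dist (x t) (y t) \<le> C1" "\<forall>t\<ge>0. dist (y t) (z t) \<le> C2"
    show "\<exists>C. \<forall>t\<ge>0. dist (x t) (z t) \<le> C"
    proof (intro exI[of _ "C1 + C2"] allI impI)
      fix t :: real assume "t \<ge> 0"
      then show "dist (x t) (z t) \<le> C1 + C2" using h dist_triangle[of "x t" "z t" "y t"] by force
    qed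
  qed
qed

lemma asym_refl: "r \<in> geodesic_rays \<Longrightarrow> (r, r) \<in> asymptotic"
  unfolding asymptotic_def by auto

lemma isometry_ray: "isometry f \<Longrightarrow> r \<in> geodesic_rays \<Longrightarrow> f \<circ> r \<in> geodesic_rays"
  unfolding isometry_def geodesic_rays_def by auto

lemma bd_fixed_of_ray:
  assumes f: "isometry f" and r: "r \<in> geodesic_rays" and C: "\<forall>t\<ge>0. dist (r t) (f (r t)) \<le> C"
  shows "asymptotic `` {r} \<in> bd_fixed_points f"
proof -
  let ?a = "asymptotic `` {r}"
  have q: "?a \<in> visual_boundary" unfolding visual_boundary_def using r by (rule quotientI)
  have rf: "(r, f \<circ> r) \<in> asymptotic" unfolding asymptotic_def using r isometry_ray[OF f r] C by auto
  have "asymptotic `` {f \<circ> r'} = ?a" if "r' \<in> ?a" for r'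
  proof -
    have rr': "(r, r') \<in> asymptotic" using that by simp
    then have "r' \<in> geodesic_rays" unfolding asymptotic_def by simp
    then have "(f \<circ> r, f \<circ> r') \<in> asymptotic" using rr' isometry_ray[OF f] f
      unfolding asymptotic_def isometry_def by auto
    then have "(r, f \<circ> r') \<in> asymptotic" using rf asym_equiv unfolding equiv_def trans_def by blast
    then show ?thesis using equiv_class_eq[OF asym_equiv] by metis
  qed
  moreover have "r \<in> ?a" using asym_refl[OF r] by simp
  ultimately have "bd_act f ?a = ?a" unfolding bd_act_def by auto
  then show ?thesis using q unfolding bd_fixed_points_def by simp
qed

lemma ray_of_bd_fixed:
  assumes f: "isometry f" and a: "\<alpha> \<in> bd_fixed_points f"
  shows "\<exists>r \<in> geodesic_rays. \<exists>C. \<forall>t\<ge>0. dist (r t) (f (r t)) \<le> C"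
proof -
  from a have q: "\<alpha> \<in> geodesic_rays // asymptotic" and fx: "bd_act f \<alpha> = \<alpha>"
    unfolding bd_fixed_points_def visual_boundary_def by auto
  from q obtain r where r: "r \<in> geodesic_rays" "\<alpha> = asymptotic `` {r}" by (auto elim: quotientE)
  have rin: "r \<in> \<alpha>" using r asym_refl by simp
  have "f \<circ> r \<in> asymptotic `` {f \<circ> r}" using asym_refl[OF isometry_ray[OF f r(1)]]
    by simp
  then have "f \<circ> r \<in> bd_act f \<alpha>" unfolding bd_act_def using rin by blast
  then have "(r, f \<circ> r) \<in> asymptotic" using fx r(2) by simp
  then show ?thesis using r(1) unfolding asymptotic_def by auto
qed

lemma (in group) conj_eq_comm:
  assumes "a \<in> carrier G" "b \<in> carrier G" "g \<in> carrier G"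
    and "inv a \<otimes> g \<otimes> a = inv b \<otimes> g \<otimes> b"
  shows "(b \<otimes> inv a) \<otimes> g = g \<otimes> (b \<otimes> inv a)"
proof -
  have "b \<otimes> (inv a \<otimes> g \<otimes> a) \<otimes> inv a = b \<otimes> (inv b \<otimes> g \<otimes> b) \<otimes> inv a" using assms(4) by simp
  moreover have "b \<otimes> (inv a \<otimes> g \<otimes> a) \<otimes> inv a = (b \<otimes> inv a) \<otimes> g"
    using assms(1-3) by (simp add: m_assoc)
  moreover have "b \<otimes> (inv b \<otimes> g \<otimes> b) \<otimes> inv a = g \<otimes> (b \<otimes> inv a)"
    using assms(1-3) by (simp add: m_assoc[symmetric])
  ultimately show ?thesis by simp
qed


context
  fixes G :: "('g, 'c) monoid_scheme" and \<phi> :: "'g \<Rightarrow> 'a::metric_space \<Rightarrow> 'a"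
  assumes grp: "group G" and geo: "geometric_action G \<phi>"
begin

lemma ga: "group_action G UNIV \<phi>" using geo unfolding geometric_action_def by simp

lemma comp: "g \<in> carrier G \<Longrightarrow> h \<in> carrier G \<Longrightarrow> \<phi> (g \<otimes>\<^bsub>G\<^esub> h) x = \<phi> g (\<phi> h x)"
  using group_action.composition_rule[OF ga] by simp

lemma one: "\<phi> \<one>\<^bsub>G\<^esub> x = x"
  using group_action.id_eq_one[OF ga] by (metis restrict_apply' UNIV_I)

lemma invact: "h \<in> carrier G \<Longrightarrow> \<phi> (inv\<^bsub>G\<^esub> h) (\<phi> h x) = x"
  using comp[of "inv\<^bsub>G\<^esub> h" h x] one group.l_inv[OF grp] group.inv_closed[OF grp] by metis

lemma iso: "h \<in> carrier G \<Longrightarrow> isometry (\<phi> h)"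
  using geo unfolding geometric_action_def by simp

lemma isod: "h \<in> carrier G \<Longrightarrow> dist (\<phi> h x) (\<phi> h y) = dist x y"
  using iso unfolding isometry_def by simp

lemma orbit_finite:
  assumes pr: "proper_metric_space TYPE('a)"
  shows "finite {h \<in> carrier G. dist (\<phi> h x) x \<le> R}"
proof (rule ccontr)
  interpret grpI: group G by (rule grp)
  assume inf: "infinite {h \<in> carrier G. dist (\<phi> h x) x \<le> R}" (is "infinite ?S")
  obtain r where r: "r > 0" and fin: "finite {g \<in> carrier G. \<phi> g ` ball x r \<inter> ball x r \<noteq> {}}"
    using geo unfolding geometric_action_def proper_action_def by blast
  have cpt: "compact (cball x R)" using pr unfolding proper_metric_space_def by simp
  obtain D where D: "D \<subseteq> cball x R" "finite D" "cball x R \<subseteq> (\<Union>y\<in>D. ball y (r/2))"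
    using compactE_image[OF cpt, of "cball x R" "\<lambda>y. ball y (r/2)"] r by force
  have "?S \<subseteq> (\<Union>y\<in>D. {h \<in> ?S. \<phi> h x \<in> ball y (r/2)})"
    using D(3) by (force simp: dist_commute)
  then obtain y where y: "y \<in> D" "infinite {h \<in> ?S. \<phi> h x \<in> ball y (r/2)}" (is "infinite ?T")
    using inf D(2) by (metis (no_types, lifting) finite_UN finite_subset)
  have "?T \<noteq> {}" using y(2) by (metis finite.emptyI)
  then obtain h0 where h0: "h0 \<in> ?T" by blast
  define m where "m h = inv\<^bsub>G\<^esub> h0 \<otimes>\<^bsub>G\<^esub> h" for h
  have h0c: "h0 \<in> carrier G" using h0 by simp
  have "inj_on m ?T" unfolding m_def inj_on_def
    using h0c by (auto simp: grpI.Units_l_cancel)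
  moreover have "m ` ?T \<subseteq> {g \<in> carrier G. \<phi> g ` ball x r \<inter> ball x r \<noteq> {}}"
  proof
    fix k assume "k \<in> m ` ?T"
    then obtain h where h: "h \<in> ?T" "k = m h" by blast
    have hc: "h \<in> carrier G" using h by simp
    have kc: "k \<in> carrier G" using h h0c unfolding m_def by simp
    have "\<phi> k x = \<phi> (inv\<^bsub>G\<^esub> h0) (\<phi> h x)" using comp h(2) hc group.inv_closed[OF grp h0c]
      unfolding m_def by simp
    then have "dist x (\<phi> k x) = dist (\<phi> (inv\<^bsub>G\<^esub> h0) (\<phi> h0 x)) (\<phi> (inv\<^bsub>G\<^esub> h0) (\<phi> h x))"
      using invact[OF h0c] by simp
    also have "\<dots> = dist (\<phi> h0 x) (\<phi> h x)" using isod group.inv_closed[OF grp h0c] by simp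
    also have "\<dots> \<le> dist (\<phi> h0 x) y + dist y (\<phi> h x)" by (rule dist_triangle)
    also have "\<dots> < r/2 + r/2" using h0 h(1) by (intro add_strict_mono) (auto simp: dist_commute)
    finally have "\<phi> k x \<in> ball x r" by simp
    moreover have "x \<in> ball x r" using r by simp
    ultimately have "\<phi> k x \<in> \<phi> k ` ball x r \<inter> ball x r" by blast
    then show "k \<in> {g \<in> carrier G. \<phi> g ` ball x r \<inter> ball x r \<noteq> {}}" using kc by blast
  qed
  ultimately have "finite ?T" using fin by (meson finite_imageD finite_subset)
  then show False using y by simp
qed

lemma cent_imp_fixed:
  assumes cat: "CAT0_space TYPE('a)" and pr: "proper_metric_space TYPE('a)"
    and gc: "g \<in> carrier G" and inf: "infinite {h \<in> carrier G. h \<otimes>\<^bsub>G\<^esub> g = g \<otimes>\<^bsub>G\<^esub> h}"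
  shows "bd_fixed_points (\<phi> g) \<noteq> {}"
proof -
  interpret grpI: group G by (rule grp)
  define x0 :: 'a where "x0 = undefined"
  define c where "c = dist x0 (\<phi> g x0)"
  have far: "\<exists>y. real n \<le> dist x0 y \<and> dist y (\<phi> g y) \<le> c" for n :: nat
  proof -
    have "finite {h \<in> carrier G. dist (\<phi> h x0) x0 \<le> real n}" by (rule orbit_finite[OF pr])
    then have "\<not> {h \<in> carrier G. h \<otimes>\<^bsub>G\<^esub> g = g \<otimes>\<^bsub>G\<^esub> h} \<subseteq> {h \<in> carrier G. dist (\<phi> h x0) x0 \<le> real n}"
      using inf finite_subset by blast
    then obtain h where h: "h \<in> carrier G" "h \<otimes>\<^bsub>G\<^esub> g = g \<otimes>\<^bsub>G\<^esub> h" "\<not> dist (\<phi> h x0) x0 \<le> real n"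
      by blast
    have "dist (\<phi> h x0) (\<phi> g (\<phi> h x0)) = dist (\<phi> h x0) (\<phi> (g \<otimes>\<^bsub>G\<^esub> h) x0)"
      using comp[OF gc h(1)] by simp
    also have "\<dots> = dist (\<phi> h x0) (\<phi> h (\<phi> g x0))" using h(2) comp[OF h(1) gc] by simp
    also have "\<dots> = c" unfolding c_def using isod[OF h(1)] by simp
    finally show ?thesis using h(3) by (intro exI[of _ "\<phi> h x0"]) (auto simp: dist_commute)
  qed
  have c0: "dist x0 (\<phi> g x0) \<le> c" unfolding c_def by simp
  obtain r where r: "r \<in> geodesic_rays" "\<forall>t. dist (r t) (\<phi> g (r t)) \<le> c"
    using ray_construct[OF cat pr iso[OF gc] far c0] by blast
  have "asymptotic `` {r} \<in> bd_fixed_points (\<phi> g)"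
    using bd_fixed_of_ray[OF iso[OF gc] r(1)] r(2) by blast
  then show ?thesis by blast
qed

lemma fixed_imp_cent:
  assumes pr: "proper_metric_space TYPE('a)"
    and gc: "g \<in> carrier G" and r: "r \<in> geodesic_rays"
    and C: "\<forall>t\<ge>0. dist (r t) (\<phi> g (r t)) \<le> C"
  shows "infinite {h \<in> carrier G. h \<otimes>\<^bsub>G\<^esub> g = g \<otimes>\<^bsub>G\<^esub> h}" (is "infinite ?Z")
proof
  interpret grpI: group G by (rule grp)
  assume finZ: "finite ?Z"
  obtain K where K: "compact K" "(\<Union>h\<in>carrier G. \<phi> h ` K) = UNIV"
    using geo unfolding geometric_action_def cocompact_action_def by blast
  obtain D x0 where D: "K \<subseteq> cball x0 D"
    using compact_imp_bounded[OF K(1)] unfolding bounded_subset_cball by blast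
  have "\<exists>h q. h \<in> carrier G \<and> q \<in> K \<and> r (real n) = \<phi> h q" for n :: nat
  proof -
    have "r (real n) \<in> (\<Union>h\<in>carrier G. \<phi> h ` K)" using K(2) by simp
    then show ?thesis by blast
  qed
  then obtain hh qq where hq: "\<And>n::nat. hh n \<in> carrier G" "\<And>n. qq n \<in> K"
    "\<And>n. r (real n) = \<phi> (hh n) (qq n)" by metis
  define k where "k n = inv\<^bsub>G\<^esub> (hh n) \<otimes>\<^bsub>G\<^esub> g \<otimes>\<^bsub>G\<^esub> hh n" for n
  have kc: "k n \<in> carrier G" for n unfolding k_def using hq(1) gc by simp
  have kd: "dist (\<phi> (k n) x0) x0 \<le> D + C + D" for n
  proof -
    have ic: "inv\<^bsub>G\<^esub> (hh n) \<in> carrier G" using hq(1) by simp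
    have act: "\<phi> (k n) y = \<phi> (inv\<^bsub>G\<^esub> (hh n)) (\<phi> g (\<phi> (hh n) y))" for y
      unfolding k_def using comp ic gc hq(1) by simp
    have qn: "qq n = \<phi> (inv\<^bsub>G\<^esub> (hh n)) (r n)" using invact[OF hq(1)] hq(3) by simp
    have e1: "\<phi> (k n) (qq n) = \<phi> (inv\<^bsub>G\<^esub> (hh n)) (\<phi> g (r n))"
      using act[of "qq n"] hq(3)[of n] by simp
    have "dist (\<phi> (k n) (qq n)) (qq n) = dist (\<phi> (inv\<^bsub>G\<^esub> (hh n)) (\<phi> g (r n))) (\<phi> (inv\<^bsub>G\<^esub> (hh n)) (r n))"
      unfolding e1 using qn by simp
    also have "\<dots> = dist (\<phi> g (r n)) (r n)" using isod[OF ic] by simp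
    also have "\<dots> \<le> C" using C by (simp add: dist_commute)
    finally have d1: "dist (\<phi> (k n) (qq n)) (qq n) \<le> C" .
    have d2: "dist (\<phi> (k n) x0) (\<phi> (k n) (qq n)) \<le> D"
      using isod[OF kc] D hq(2)[of n] by (auto simp: dist_commute)
    have d3: "dist (qq n) x0 \<le> D" using D hq(2)[of n] by (auto simp: dist_commute)
    have "dist (\<phi> (k n) x0) x0 \<le> dist (\<phi> (k n) x0) (\<phi> (k n) (qq n)) + dist (\<phi> (k n) (qq n)) x0"
      by (rule dist_triangle)
    also have "dist (\<phi> (k n) (qq n)) x0 \<le> dist (\<phi> (k n) (qq n)) (qq n) + dist (qq n) x0"
      by (rule dist_triangle)
    finally show ?thesis using d1 d2 d3 by linarith
  qed
  have "range k \<subseteq> {h \<in> carrier G. dist (\<phi> h x0) x0 \<le> D + C + D}" using kc kd by auto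
  then have "finite (range k)" using orbit_finite[OF pr] finite_subset by blast
  then obtain k0 where "infinite (k -` {k0})" using inf_img_fin_domE[of k UNIV] by auto
  define N where "N = k -` {k0}"
  have infN: "infinite N" unfolding N_def by fact
  have "N \<noteq> {}" using infN by (metis finite.emptyI)
  then obtain m where m: "m \<in> N" by blast
  have hN: "hh ` N \<subseteq> (\<lambda>z. inv\<^bsub>G\<^esub> z \<otimes>\<^bsub>G\<^esub> hh m) ` ?Z"
  proof
    fix v assume "v \<in> hh ` N"
    then obtain n where n: "n \<in> N" "v = hh n" by blast
    have "k n = k m" using n m unfolding N_def by simp
    then have eq: "inv\<^bsub>G\<^esub> (hh n) \<otimes>\<^bsub>G\<^esub> g \<otimes>\<^bsub>G\<^esub> hh n = inv\<^bsub>G\<^esub> (hh m) \<otimes>\<^bsub>G\<^esub> g \<otimes>\<^bsub>G\<^esub> hh m"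
      unfolding k_def .
    define a where "a = hh m \<otimes>\<^bsub>G\<^esub> inv\<^bsub>G\<^esub> (hh n)"
    have aZ: "a \<in> ?Z" unfolding a_def
      using grpI.conj_eq_comm[OF hq(1)[of n] hq(1)[of m] gc eq] hq(1) by simp
    have "inv\<^bsub>G\<^esub> a \<otimes>\<^bsub>G\<^esub> hh m = hh n" unfolding a_def
      using hq(1)[of n] hq(1)[of m] by (simp add: grpI.inv_mult_group grpI.m_assoc)
    then show "v \<in> (\<lambda>z. inv\<^bsub>G\<^esub> z \<otimes>\<^bsub>G\<^esub> hh m) ` ?Z" using aZ n(2) by force
  qed
  have finhN: "finite (hh ` N)" using finite_subset[OF hN] finZ by blast
  have finfib: "finite {n \<in> N. hh n = v}" for v
  proof (cases "{n \<in> N. hh n = v} = {}")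
    case True then show ?thesis by (subst True) (rule finite.emptyI)
  next
    case False
    then obtain n0 where n0: "n0 \<in> N" "hh n0 = v" by blast
    have "n \<le> nat \<lceil>real n0 + 2 * D\<rceil>" if "n \<in> N" "hh n = v" for n
    proof -
      have "\<bar>real n - real n0\<bar> = dist (r (real n)) (r (real n0))"
        using r unfolding geodesic_rays_def by simp
      also have "\<dots> = dist (qq n) (qq n0)" using hq(3) that(2) n0(2) isod[OF hq(1)[of n]] by simp
      also have "\<dots> \<le> dist (qq n) x0 + dist (qq n0) x0" by (rule dist_triangle2)
      also have "\<dots> \<le> 2 * D"
      proof -
        have "dist x0 (qq n) \<le> D" "dist x0 (qq n0) \<le> D" using D hq(2)[of n] hq(2)[of n0] by auto
        then show ?thesis by (simp add: dist_commute)
      qed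
      finally show ?thesis by linarith
    qed
    then have "{n \<in> N. hh n = v} \<subseteq> {..nat \<lceil>real n0 + 2 * D\<rceil>}" by auto
    then show ?thesis using finite_subset by blast
  qed
  have "N \<subseteq> (\<Union>v\<in>hh ` N. {n \<in> N. hh n = v})" by blast
  then have "finite N" using finhN finfib by (meson finite_UN_I finite_subset)
  then show False using infN by simp
qed

lemma char:
  assumes cat: "CAT0_space TYPE('a)" and pr: "proper_metric_space TYPE('a)"
    and gc: "g \<in> carrier G"
  shows "bd_fixed_points (\<phi> g) \<noteq> {} \<longleftrightarrow> infinite {h \<in> carrier G. h \<otimes>\<^bsub>G\<^esub> g = g \<otimes>\<^bsub>G\<^esub> h}"
proof
  assume "bd_fixed_points (\<phi> g) \<noteq> {}"
  then obtain \<alpha> where "\<alpha> \<in> bd_fixed_points (\<phi> g)" by blast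
  then obtain r C where "r \<in> geodesic_rays" "\<forall>t\<ge>0. dist (r t) (\<phi> g (r t)) \<le> C"
    using ray_of_bd_fixed[OF iso[OF gc]] by blast
  then show "infinite {h \<in> carrier G. h \<otimes>\<^bsub>G\<^esub> g = g \<otimes>\<^bsub>G\<^esub> h}"
    using fixed_imp_cent[OF pr gc] by blast
next
  assume "infinite {h \<in> carrier G. h \<otimes>\<^bsub>G\<^esub> g = g \<otimes>\<^bsub>G\<^esub> h}"
  then show "bd_fixed_points (\<phi> g) \<noteq> {}" using cent_imp_fixed[OF cat pr gc] by blast
qed

end

theorem corollary2:
  fixes G :: "('g, 'c) monoid_scheme"
    and \<phi> :: "'g \<Rightarrow> 'a::metric_space \<Rightarrow> 'a"
    and \<psi> :: "'g \<Rightarrow> 'b::metric_space \<Rightarrow> 'b"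
  assumes "group G"
    and "CAT0_space TYPE('a)" and "proper_metric_space TYPE('a)"
    and "CAT0_space TYPE('b)" and "proper_metric_space TYPE('b)"
    and "geometric_action G \<phi>" and "geometric_action G \<psi>"
    and "g \<in> carrier G"
  shows "bd_fixed_points (\<phi> g) \<noteq> {} \<longleftrightarrow> bd_fixed_points (\<psi> g) \<noteq> {}"
  using char[OF assms(1) assms(6) assms(2) assms(3) assms(8)]
    char[OF assms(1) assms(7) assms(4) assms(5) assms(8)] by simp

end
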